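(* Assume Assumption (S) and the upwind condition $A_{i,0}=0$ for all $i$, and let $\mathbb D^*:\mathbb V^k\to\mathbb V^k$ be defined by $(\mathbb D^*v,\omega)_*=\tau\mathcal H^*(v,\omega)$ for all $\omega\in\mathbb V^k$. Then: (1) (skew-symmetry) $(\mathbb D^*v,\omega)_*+(v,\mathbb D^*\omega)_*=-\tau\beta\langle[\![v]\!],[\![\omega]\!]\rangle$ for all $v,\omega\in\mathbb V^k$; (2) (non-positivity) for every symmetric positive semi-definite matrix $(\theta_{\kappa,\kappa_0})$ and every family $\{v_\kappa\}\subset\mathbb V^k$, $\sum_{\kappa,\kappa_0}\theta_{\kappa,\kappa_0}(\mathbb D^*v_\kappa,v_{\kappa_0})_*=-\frac{\tau\beta}{2}\sum_{\kappa,\kappa_0}\theta_{\kappa,\kappa_0}\langle[\![v_\kappa]\!],[\![v_{\kappa_0}]\!]\rangle\le0$; (3) (weak boundedness) $(\mathbb D^*v,\omega)_*\le C\frac{\tau}{h}\|v\|_*\|\omega\|_*$ for all $v,\omega\in\mathbb V^k$, with $C$ independent of $\tau,h$.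
   Context: Let $\Omega=[a,b]$ be partitioned into finitely many cells $I_i=[x_{i-\frac12},x_{i+\frac12}]$ with sizes $h_i$, $h=\max_ih_i$, quasi-uniform ($h\le Ch_i$, fixed $C$); indices periodic. $(\cdot,\cdot)$: $L^2(\Omega)$ inner product; $(\cdot,\cdot)_{I_i}$: $L^2(I_i)$ inner product. $\mathbb V^k=\{v\in L^2(\Omega): v|_{I_i}\in\mathbb P^k(I_i)\ \forall i\}$. Each $I_i$ has subdivision points $x_{i-\frac12}=x_{i,0}<x_{i,1}<\dots<x_{i,k}<x_{i,k+1}=x_{i+\frac12}$, control volumes $I_{i,j}=[x_{i,j},x_{i,j+1}]$; $\mathbb V^{k,*}$ = functions constant on each $I_{i,j}$. Quadrature on $I_i$: $Q_i^k(v)=\sum_{j=0}^{k+1}A_{i,j}v(x_{i,j})$ (applied to restrictions to $I_i$), error $R_i^k(v)=\int_{I_i}v\,dx-Q_i^k(v)$, exact on $\mathbb P^{k-1}(I_i)$. $M^*:\mathbb V^k\to\mathbb V^{k,*}$: for $v=\omega|_{I_i}$, $(M^*\omega)|_{I_{i,0}}=v(x_{i-\frac12})+A_{i,0}v'(x_{i-\frac12})$, $(M^*\omega)|_{I_{i,j}}-(M^*\omega)|_{I_{i,j-1}}=A_{i,j}v'(x_{i,j})$, $j=1,\dots,k$. $L_{i,\ell}$: shifted Legendre polynomial of degree $\ell$ on $I_i$, $L_{i,\ell}(x_{i+\frac12})=1$, $(L_{i,\ell},L_{i,m})_{I_i}=\delta_{\ell m}h_i/(2\ell+1)$. Assumption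 (S): $k\ge1$ and for every $i$, $R_i^k$ vanishes on $\mathbb P^{2k-1}(I_i)$ and $\frac{h_i}{2k-1}-Q_i^k(L_{i,k+1}L_{i,k-1})>0$; then $(v,\omega)_*:=(v,M^*\omega)$ is an inner product on $\mathbb V^k$, $\|v\|_*=\sqrt{(v,v)_*}$. Jumps $[\![v]\!]_{i+\frac12}=v(x_{i+\frac12}^+)-v(x_{i+\frac12}^-)$, $\langle[\![v]\!],[\![\omega]\!]\rangle=\sum_i[\![v]\!]_{i+\frac12}[\![\omega]\!]_{i+\frac12}$. With $A_{i,0}=0$, for $v,\omega\in\mathbb V^k$: $\mathcal H^*(v,\omega)=\beta\big(\sum_iQ_i^k(v\omega_x)+\sum_iv(x_{i+\frac12}^-)[\![\omega]\!]_{i+\frac12}\big)$, $\beta>0$ constant; $\tau>0$ is the time step. *)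

theory Defs
  imports "HOL-Analysis.Analysis" "HOL-Computational_Algebra.Polynomial"
begin

text \<open>Legendre polynomials on [-1,1] (Bonnet recursion), normalised by P_n(1) = 1.\<close>
fun legendre :: "nat \<Rightarrow> real poly" where
  "legendre 0 = 1"
| "legendre (Suc 0) = [:0, 1:]"
| "legendre (Suc (Suc n)) =
     smult ((2 * real n + 3) / (real n + 2)) ([:0, 1:] * legendre (Suc n))
     - smult ((real n + 1) / (real n + 2)) (legendre n)"

definition shleg :: "real \<Rightarrow> real \<Rightarrow> nat \<Rightarrow> real \<Rightarrow> real" where
  "shleg c d l t = poly (legendre l) (2 * (t - c) / (d - c) - 1)"

definition quad :: "nat \<Rightarrow> (nat \<Rightarrow> real) \<Rightarrow> (nat \<Rightarrow> real) \<Rightarrow> (real \<Rightarrow> real) \<Rightarrow> real" where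
  "quad k nd wt f = (\<Sum>j\<le>Suc k. wt j * f (nd j))"

definition valid_nodes :: "nat \<Rightarrow> real \<Rightarrow> real \<Rightarrow> (nat \<Rightarrow> real) \<Rightarrow> bool" where
  "valid_nodes k c d nd \<longleftrightarrow> nd 0 = c \<and> nd (Suc k) = d \<and> (\<forall>j\<le>k. nd j < nd (Suc j))"

definition assumption_S :: "nat \<Rightarrow> real \<Rightarrow> real \<Rightarrow> (nat \<Rightarrow> real) \<Rightarrow> (nat \<Rightarrow> real) \<Rightarrow> bool" where
  "assumption_S k c d nd wt \<longleftrightarrow> 1 \<le> k \<and>
     (\<forall>p :: real poly. degree p \<le> 2 * k - 1 \<longrightarrow>
         integral {c..d} (poly p) - quad k nd wt (poly p) = 0) \<and>
     (d - c) / (2 * real k - 1)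
        - quad k nd wt (\<lambda>t. shleg c d (k + 1) t * shleg c d (k - 1) t) > 0"

text \<open>Mesh: cells I_i = [x i, x (i+1)], i < N. The quadrature on cell i is the affine image
  of a reference rule (nodes xi, weights w) on [0,1].\<close>
definition cnode :: "(nat \<Rightarrow> real) \<Rightarrow> (nat \<Rightarrow> real) \<Rightarrow> nat \<Rightarrow> nat \<Rightarrow> real" where
  "cnode x xi i j = x i + xi j * (x (Suc i) - x i)"

definition cweight :: "(nat \<Rightarrow> real) \<Rightarrow> (nat \<Rightarrow> real) \<Rightarrow> nat \<Rightarrow> nat \<Rightarrow> real" where
  "cweight x w i j = w j * (x (Suc i) - x i)"

definition meshsize :: "nat \<Rightarrow> (nat \<Rightarrow> real) \<Rightarrow> real" where
  "meshsize N x = Max ((\<lambda>i. x (Suc i) - x i) ` {..<N})"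

text \<open>Elements of V^k are represented by their restrictions to the cells.\<close>
definition Vk :: "nat \<Rightarrow> nat \<Rightarrow> (nat \<Rightarrow> real poly) \<Rightarrow> bool" where
  "Vk N k v \<longleftrightarrow> (\<forall>i<N. degree (v i) \<le> k)"

text \<open>Value of M^* omega on control volume I_{i,j}, j = 0..k.\<close>
definition Mstar :: "(nat \<Rightarrow> real) \<Rightarrow> (nat \<Rightarrow> real) \<Rightarrow> (nat \<Rightarrow> real) \<Rightarrow> (nat \<Rightarrow> real poly)
    \<Rightarrow> nat \<Rightarrow> nat \<Rightarrow> real" where
  "Mstar x xi w om i j = poly (om i) (x i)
     + (\<Sum>l\<le>j. cweight x w i l * poly (pderiv (om i)) (cnode x xi i l))"

text \<open>(v, omega)_* = (v, M^* omega).\<close>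
definition star_ip :: "nat \<Rightarrow> nat \<Rightarrow> (nat \<Rightarrow> real) \<Rightarrow> (nat \<Rightarrow> real) \<Rightarrow> (nat \<Rightarrow> real)
    \<Rightarrow> (nat \<Rightarrow> real poly) \<Rightarrow> (nat \<Rightarrow> real poly) \<Rightarrow> real" where
  "star_ip N k x xi w v om = (\<Sum>i<N. \<Sum>j\<le>k. Mstar x xi w om i j *
      integral {cnode x xi i j .. cnode x xi i (Suc j)} (poly (v i)))"

definition star_norm :: "nat \<Rightarrow> nat \<Rightarrow> (nat \<Rightarrow> real) \<Rightarrow> (nat \<Rightarrow> real) \<Rightarrow> (nat \<Rightarrow> real)
    \<Rightarrow> (nat \<Rightarrow> real poly) \<Rightarrow> real" where
  "star_norm N k x xi w v = sqrt (star_ip N k x xi w v v)"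

text \<open>Periodic jump at x_{i+1/2}: v(x^+) - v(x^-).\<close>
definition jump :: "nat \<Rightarrow> (nat \<Rightarrow> real) \<Rightarrow> (nat \<Rightarrow> real poly) \<Rightarrow> nat \<Rightarrow> real" where
  "jump N x v i = poly (v (Suc i mod N)) (x (Suc i mod N)) - poly (v i) (x (Suc i))"

definition jump_ip :: "nat \<Rightarrow> (nat \<Rightarrow> real) \<Rightarrow> (nat \<Rightarrow> real poly) \<Rightarrow> (nat \<Rightarrow> real poly) \<Rightarrow> real" where
  "jump_ip N x v om = (\<Sum>i<N. jump N x v i * jump N x om i)"

text \<open>H^*(v, omega) (upwind case A_{i,0} = 0).\<close>
definition Hstar :: "nat \<Rightarrow> nat \<Rightarrow> (nat \<Rightarrow> real) \<Rightarrow> (nat \<Rightarrow> real) \<Rightarrow> (nat \<Rightarrow> real) \<Rightarrow> real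
    \<Rightarrow> (nat \<Rightarrow> real poly) \<Rightarrow> (nat \<Rightarrow> real poly) \<Rightarrow> real" where
  "Hstar N k x xi w \<beta> v om = \<beta> *
     ((\<Sum>i<N. \<Sum>j\<le>Suc k. cweight x w i j *
         (poly (v i) (cnode x xi i j) * poly (pderiv (om i)) (cnode x xi i j)))
      + (\<Sum>i<N. poly (v i) (x (Suc i)) * jump N x om i))"

end

theory Submission
  imports Defs
begin


definition antider :: "real poly \<Rightarrow> real poly" where
  "antider p = (\<Sum>i\<le>degree p. monom (coeff p i / real (Suc i)) (Suc i))"

lemma pderiv_sum': "pderiv (sum f A) = (\<Sum>x\<in>A. pderiv (f x))"
  using higher_pderiv_sum[of 1 f A] by simp

lemma pderiv_antider: "pderiv (antider p) = p"
proof -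
  have "pderiv (antider p) = (\<Sum>i\<le>degree p. monom (coeff p i) i)"
    unfolding antider_def by (simp add: pderiv_sum' pderiv_monom)
  also have "\<dots> = p" by (rule poly_as_sum_of_monoms)
  finally show ?thesis .
qed

lemma ftc_poly:
  fixes a b :: real
  assumes "pderiv A = p" "a \<le> b"
  shows "integral {a..b} (poly p) = poly A b - poly A a"
proof -
  have "((poly p) has_integral (poly A b - poly A a)) {a..b}"
    apply (rule fundamental_theorem_of_calculus[OF assms(2)])
    using assms(1) poly_DERIV[of A]
    by (metis has_real_derivative_iff_has_vector_derivative has_field_derivative_at_within)
  then show ?thesis by blast
qed



lemma leg_rec_p:
  "poly (legendre (Suc (Suc n))) x * (real n + 2) =
     (2*real n+3) * x * poly (legendre (Suc n)) x - (real n + 1) * poly (legendre n) x"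
proof -
  have h: "real n + 2 \<noteq> 0" by simp
  have "poly (legendre (Suc (Suc n))) x * (real n + 2) = 
     ((2 * real n + 3) / (real n + 2) * (x * poly (legendre (Suc n)) x)
       - (real n + 1) / (real n + 2) * poly (legendre n) x) * (real n + 2)" by simp
  also have "\<dots> = (2*real n+3) * x * poly (legendre (Suc n)) x - (real n + 1) * poly (legendre n) x"
    using h by (simp add: left_diff_distrib)
  finally show ?thesis .
qed

lemma leg_rec_d:
  "poly (pderiv (legendre (Suc (Suc n)))) x * (real n + 2) =
     (2*real n+3) * (poly (legendre (Suc n)) x + x * poly (pderiv (legendre (Suc n))) x)
     - (real n + 1) * poly (pderiv (legendre n)) x"
proof -
  have h: "real n + 2 \<noteq> 0" by simp
  have "poly (pderiv (legendre (Suc (Suc n)))) x * (real n + 2) = 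
     ((2 * real n + 3) / (real n + 2) * (poly (legendre (Suc n)) x + x * poly (pderiv (legendre (Suc n))) x)
       - (real n + 1) / (real n + 2) * poly (pderiv (legendre n)) x) * (real n + 2)"
    by (simp add: pderiv_diff pderiv_smult pderiv_mult pderiv_pCons algebra_simps add_divide_distrib)
  also have "\<dots> = (2*real n+3) * (poly (legendre (Suc n)) x + x * poly (pderiv (legendre (Suc n))) x)
     - (real n + 1) * poly (pderiv (legendre n)) x"
    using h by (simp add: left_diff_distrib)
  finally show ?thesis .
qed

lemma leg_AB:
  "poly (pderiv (legendre (Suc n))) x = x * poly (pderiv (legendre n)) x + (real n + 1) * poly (legendre n) x
   \<and> x * poly (pderiv (legendre (Suc n))) x - poly (pderiv (legendre n)) x = (real n + 1) * poly (legendre (Suc n)) x"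
proof (induction n)
  case 0
  then show ?case by (simp add: pderiv_pCons)
next
  case (Suc n)
  define m where "m = real n"
  define p0 where "p0 = poly (legendre n) x"
  define p1 where "p1 = poly (legendre (Suc n)) x"
  define p2 where "p2 = poly (legendre (Suc (Suc n))) x"
  define d0 where "d0 = poly (pderiv (legendre n)) x"
  define d1 where "d1 = poly (pderiv (legendre (Suc n))) x"
  define d2 where "d2 = poly (pderiv (legendre (Suc (Suc n)))) x"
  have A: "d1 = x * d0 + (m+1) * p0" and B: "x * d1 - d0 = (m+1) * p1"
    using Suc.IH unfolding m_def p0_def p1_def d0_def d1_def by auto
  have Rp: "p2 * (m+2) = (2*m+3) * x * p1 - (m+1) * p0"
    unfolding m_def p0_def p1_def p2_def by (rule leg_rec_p)
  have Rd: "d2 * (m+2) = (2*m+3) * (p1 + x * d1) - (m+1) * d0"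
    unfolding m_def p0_def p1_def d2_def d0_def d1_def by (rule leg_rec_d)
  have m0: "m + 2 \<noteq> 0" unfolding m_def by simp
  have d0e: "d0 = x * d1 - (m+1) * p1" using B by simp
  have "d2 * (m+2) = (x * d1 + (m+2) * p1) * (m+2)"
    using Rd unfolding d0e by (simp add: algebra_simps power2_eq_square)
  hence A2: "d2 = x * d1 + (m+2) * p1" using m0 by simp
  have C: "(x*x - 1) * d0 = (m+1) * (p1 - x * p0)"
  proof -
    have "x * (x * d0 + (m+1) * p0) - d0 = (m+1) * p1" using A B by simp
    thus ?thesis by (simp add: algebra_simps)
  qed
  have C2: "(x*x - 1) * d1 = (m+1) * (x * p1 - p0)"
  proof -
    have "(x*x - 1) * d1 = x * ((x*x - 1) * d0) + (m+1) * (x*x-1) * p0"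
      unfolding A by (simp add: algebra_simps)
    also have "\<dots> = (m+1) * (x * p1 - p0)" unfolding C by (simp add: algebra_simps)
    finally show ?thesis .
  qed
  have "x * d2 - d1 = (x*x - 1) * d1 + (m+2) * x * p1" unfolding A2 by (simp add: algebra_simps)
  also have "\<dots> = (2*m+3) * x * p1 - (m+1) * p0" unfolding C2 by (simp add: algebra_simps)
  also have "\<dots> = (m+2) * p2" using Rp by (simp add: algebra_simps)
  finally have B2: "x * d2 - d1 = (m+2) * p2" .
  show ?case using A2 B2 unfolding m_def p0_def p1_def p2_def d0_def d1_def d2_def
    by (simp add: algebra_simps)
qed

lemma leg_D:
  "pderiv (legendre (Suc (Suc n))) - pderiv (legendre n) = smult (2*real n+3) (legendre (Suc n))"
proof -
  have "poly (pderiv (legendre (Suc (Suc n))) - pderiv (legendre n)) x =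
        poly (smult (2*real n+3) (legendre (Suc n))) x" for x
  proof -
    let ?d2 = "poly (pderiv (legendre (Suc (Suc n)))) x"
    let ?d1 = "poly (pderiv (legendre (Suc n))) x"
    let ?d0 = "poly (pderiv (legendre n)) x"
    let ?p1 = "poly (legendre (Suc n)) x"
    have a: "?d2 = x * ?d1 + (real n + 2) * ?p1" using leg_AB[of "Suc n" x] by simp
    have b: "?d0 = x * ?d1 - (real n + 1) * ?p1" using conjunct2[OF leg_AB[of n x]] by linarith
    have "?d2 - ?d0 = (x * ?d1 + (real n + 2) * ?p1) - (x * ?d1 - (real n + 1) * ?p1)"
      using a b by simp
    also have "\<dots> = (2*real n+3) * ?p1" by (simp add: algebra_simps)
    finally show ?thesis by simp
  qed
  then show ?thesis using poly_eq_poly_eq_iff by blast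
qed

lemma leg_val1: "poly (legendre n) 1 = 1"
proof (induction n rule: legendre.induct)
  case (3 n)
  have "poly (legendre (Suc (Suc n))) 1 * (real n + 2) = real n + 2"
    using leg_rec_p[of n 1] 3 by simp
  then show ?case by simp
qed simp_all

lemma leg_valm1: "poly (legendre n) (-1) = (-1)^n"
proof (induction n rule: legendre.induct)
  case (3 n)
  have "poly (legendre (Suc (Suc n))) (-1) * (real n + 2) = (-1)^n * (real n + 2)"
    using leg_rec_p[of n "-1"] 3 by (simp add: algebra_simps)
  then show ?case by simp
qed simp_all

lemma leg_deg: "degree (legendre n) = n \<and> coeff (legendre n) n > 0
   \<and> coeff (legendre (Suc n)) (Suc n) = (2*real n+1)/(real n+1) * coeff (legendre n) n"
proof (induction n rule: legendre.induct)
  case 1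
  then show ?case by simp
next
  case 2
  then show ?case by simp
next
  case (3 n)
  have IH1: "degree (legendre (Suc n)) = Suc n" "coeff (legendre (Suc n)) (Suc n) > 0"
    using 3 by auto
  have IH0: "degree (legendre n) = n" using 3 by auto
  define c where "c = coeff (legendre (Suc n)) (Suc n)"
  have cf: "coeff (legendre (Suc (Suc n))) (Suc (Suc n)) = (2*real n+3)/(real n+2) * c"
    using IH0 by (simp add: c_def coeff_eq_0)
  have "degree ([:0,1:] * legendre (Suc n)) \<le> Suc (Suc n)"
    using IH1 degree_mult_le[of "[:0,1:]" "legendre (Suc n)"] by simp
  hence a: "degree (smult ((2 * real n + 3) / (real n + 2)) ([:0,1:] * legendre (Suc n))) \<le> Suc (Suc n)"
    using IH1 by simp
  have b: "degree (smult ((real n + 1) / (real n + 2)) (legendre n)) \<le> Suc (Suc n)" using IH0 by simp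
  have dle: "degree (legendre (Suc (Suc n))) \<le> Suc (Suc n)"
    unfolding legendre.simps by (rule degree_diff_le[OF a b])
  have cpos: "coeff (legendre (Suc (Suc n))) (Suc (Suc n)) > 0"
    unfolding cf using IH1 c_def by (simp add: zero_less_mult_iff)
  hence "Suc (Suc n) \<le> degree (legendre (Suc (Suc n)))"
    by (metis less_irrefl le_degree)
  with dle have dg: "degree (legendre (Suc (Suc n))) = Suc (Suc n)" by linarith
  have "coeff (legendre (Suc (Suc (Suc n)))) (Suc (Suc (Suc n))) =
        (2*real (Suc n)+3)/(real (Suc n)+2) * coeff (legendre (Suc (Suc n))) (Suc (Suc n))"
    using IH1 by (simp add: coeff_eq_0)
  then show ?case using dg cpos by (simp add: field_simps)
qed



definition SL :: "nat \<Rightarrow> real poly" where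
  "SL n = pcompose (legendre n) [:-1, 2:]"

lemma poly_SL: "poly (SL n) t = poly (legendre n) (2*t - 1)"
  by (simp add: SL_def poly_pcompose algebra_simps)

lemma shleg_SL: "shleg 0 1 l t = poly (SL l) t"
  by (simp add: shleg_def poly_SL)

lemma SL_deg: "degree (SL n) = n"
  using leg_deg[of n] by (simp add: SL_def degree_pcompose)

lemma SL_lc: "coeff (SL n) n = coeff (legendre n) n * 2^n"
  using lead_coeff_comp[of "[:-1,2:]" "legendre n"] leg_deg[of n] SL_deg[of n]
  by (simp add: SL_def)

lemma SL_lc_pos: "coeff (SL n) n > 0"
  using SL_lc[of n] leg_deg[of n] by simp

lemma SL_lc_rec: "coeff (SL (Suc n)) (Suc n) = 2 * (2*real n+1)/(real n+1) * coeff (SL n) n"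
  using SL_lc[of n] SL_lc[of "Suc n"] leg_deg[of n] by simp

lemma SL_val1: "poly (SL n) 1 = 1"
  by (simp add: poly_SL leg_val1)

lemma SL_val0: "poly (SL n) 0 = (-1)^n"
  using leg_valm1[of n] by (simp add: poly_SL)

lemma pderiv_SL: "pderiv (SL n) = smult 2 (pcompose (pderiv (legendre n)) [:-1,2:])"
  by (simp add: SL_def pderiv_pcompose pderiv_pCons)

lemma SL_D:
  "pderiv (SL (Suc (Suc n))) - pderiv (SL n) = smult (2*(2*real n+3)) (SL (Suc n))"
proof -
  have "pderiv (SL (Suc (Suc n))) - pderiv (SL n) =
     smult 2 (pcompose (pderiv (legendre (Suc (Suc n))) - pderiv (legendre n)) [:-1,2:])"
    by (simp add: pderiv_SL pcompose_diff smult_diff_right)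
  also have "\<dots> = smult (2*(2*real n+3)) (SL (Suc n))"
    unfolding leg_D by (simp add: pcompose_smult SL_def)
  finally show ?thesis .
qed

lemma SL_D1: "pderiv (SL (Suc 0)) = smult 2 (SL 0)"
  by (simp add: SL_def pderiv_pCons pcompose_1 pcompose_pCons)

definition int01 :: "real poly \<Rightarrow> real" where
  "int01 p = integral {0..1} (poly p)"

lemma int01_ftc: "pderiv A = p \<Longrightarrow> int01 p = poly A 1 - poly A 0"
  unfolding int01_def by (rule ftc_poly) auto

lemma int01_antider: "int01 p = poly (antider p) 1 - poly (antider p) 0"
  by (rule int01_ftc[OF pderiv_antider])

lemma int01_add: "int01 (p + q) = int01 p + int01 q"
  using int01_ftc[of "antider p + antider q" "p + q"]
  by (simp add: pderiv_add pderiv_antider int01_antider)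

lemma int01_smult: "int01 (smult c p) = c * int01 p"
  using int01_ftc[of "smult c (antider p)" "smult c p"]
  by (simp add: pderiv_smult pderiv_antider int01_antider algebra_simps)

lemma int01_diff: "int01 (p - q) = int01 p - int01 q"
  using int01_add[of p "-q"] int01_smult[of "-1" q] by simp

lemma int01_0[simp]: "int01 0 = 0"
  using int01_smult[of 0 0] by simp

lemma int01_ibp:
  "int01 (pderiv F * q) = poly F 1 * poly q 1 - poly F 0 * poly q 0 - int01 (F * pderiv q)"
proof -
  have "int01 (F * pderiv q) + int01 (pderiv F * q) = int01 (pderiv (F * q))"
    by (simp only: pderiv_mult int01_add mult.commute[of q])
  also have "\<dots> = poly F 1 * poly q 1 - poly F 0 * poly q 0"
    by (simp add: int01_ftc)
  finally show ?thesis by linarith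
qed

lemma SL_as_deriv:
  "SL (Suc m) = smult (1/(2*(2*real m+3))) (pderiv (SL (Suc (Suc m)) - SL m))"
  using SL_D[of m] by (simp add: pderiv_diff)

lemma SL_F_vals: "poly (SL (Suc (Suc m)) - SL m) 1 = 0" "poly (SL (Suc (Suc m)) - SL m) 0 = 0"
  by (simp_all add: SL_val1 SL_val0)

lemma SL_orth_aux:
  "int01 (SL (Suc m) * q) =
     - (1/(2*(2*real m+3))) * (int01 (SL (Suc (Suc m)) * pderiv q) - int01 (SL m * pderiv q))"
proof -
  have "int01 (SL (Suc m) * q) = (1/(2*(2*real m+3))) * int01 (pderiv (SL (Suc (Suc m)) - SL m) * q)"
    by (subst SL_as_deriv) (simp add: int01_smult)
  also have "int01 (pderiv (SL (Suc (Suc m)) - SL m) * q) = - int01 ((SL (Suc (Suc m)) - SL m) * pderiv q)"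
    unfolding int01_ibp SL_F_vals by simp
  also have "int01 ((SL (Suc (Suc m)) - SL m) * pderiv q) = int01 (SL (Suc (Suc m)) * pderiv q) - int01 (SL m * pderiv q)"
    by (simp add: left_diff_distrib int01_diff)
  finally show ?thesis by (simp only: mult_minus_right mult_minus_left)
qed

lemma SL_orth_gen: "\<forall>q n. degree q \<le> d \<longrightarrow> degree q < n \<longrightarrow> int01 (SL n * q) = 0"
proof (induction d)
  case 0
  show ?case
  proof (intro allI impI)
    fix q :: "real poly" and n :: nat
    assume "degree q \<le> 0" "degree q < n"
    then obtain m where n: "n = Suc m" and "pderiv q = 0"
      by (cases n) (auto simp: pderiv_eq_0_iff)
    then show "int01 (SL n * q) = 0" unfolding n by (simp add: SL_orth_aux[of m])
  qed
next
  case (Suc d)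
  show ?case
  proof (intro allI impI)
    fix q :: "real poly" and n :: nat
    assume a: "degree q \<le> Suc d" "degree q < n"
    then obtain m where n: "n = Suc m" by (cases n) auto
    show "int01 (SL n * q) = 0"
    proof (cases "pderiv q = 0")
      case True
      then show ?thesis unfolding n by (simp add: SL_orth_aux[of m])
    next
      case False
      hence "degree q > 0" by (simp add: pderiv_eq_0_iff)
      hence d1: "degree (pderiv q) \<le> d" "degree (pderiv q) < m" "degree (pderiv q) < Suc (Suc m)"
        using a n by (simp_all add: degree_pderiv)
      have "int01 (SL (Suc (Suc m)) * pderiv q) = 0" using Suc.IH d1 by blast
      moreover have "int01 (SL m * pderiv q) = 0" using Suc.IH d1 by blast
      ultimately show ?thesis unfolding n by (simp add: SL_orth_aux[of m])
    qed
  qed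
qed

lemma SL_orth: "degree q < n \<Longrightarrow> int01 (SL n * q) = 0"
  using SL_orth_gen[of "degree q"] by blast

lemma SL_norm: "int01 (SL n * SL n) = 1 / (2*real n+1)"
proof (induction n)
  case 0
  have "int01 1 = 1" using int01_ftc[of "[:0,1:]" 1] by (simp add: pderiv_pCons)
  then show ?case by (simp add: SL_def pcompose_1)
next
  case (Suc m)
  have z1: "int01 (SL (Suc (Suc m)) * pderiv (SL (Suc m))) = 0"
    by (rule SL_orth) (simp add: degree_pderiv SL_deg)
  have z2: "int01 (SL m * pderiv (SL (Suc m))) = 2*(2*real m+1) * int01 (SL m * SL m)"
  proof (cases m)
    case 0
    then show ?thesis by (simp add: SL_D1 int01_smult)
  next
    case (Suc j)
    have "pderiv (SL (Suc m)) = pderiv (SL j) + smult (2*(2*real j+3)) (SL m)"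
      using SL_D[of j] Suc by (simp add: algebra_simps)
    hence "int01 (SL m * pderiv (SL (Suc m))) = int01 (SL m * pderiv (SL j)) + 2*(2*real j+3) * int01 (SL m * SL m)"
      by (simp add: distrib_left int01_add int01_smult)
    moreover have "int01 (SL m * pderiv (SL j)) = 0"
      by (rule SL_orth) (simp add: degree_pderiv SL_deg Suc)
    ultimately show ?thesis using Suc by simp
  qed
  have h0: "2*real m+1 \<noteq> 0" by simp
  have h1: "2*(2*real m+1) * (1/(2*real m+1)) = 2" using h0 by (simp add: field_simps)
  show ?case unfolding SL_orth_aux[of m] z1 z2 Suc.IH h1 by (simp add: field_simps)
qed



lemma coeff_antider_Suc: "coeff (antider p) (Suc i) = coeff p i / real (Suc i)"
proof -
  have "coeff (antider p) (Suc i) = (\<Sum>j\<le>degree p. if Suc j = Suc i then coeff p j / real (Suc j) else 0)"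
    unfolding antider_def coeff_sum by simp
  also have "\<dots> = (if i \<le> degree p then coeff p i / real (Suc i) else 0)"
    by (simp add: sum.delta)
  also have "\<dots> = coeff p i / real (Suc i)" by (auto simp: coeff_eq_0)
  finally show ?thesis .
qed

lemma degree_antider: "degree (antider p) \<le> Suc (degree p)"
  unfolding antider_def
  by (rule degree_sum_le) (auto simp: degree_monom_le intro: order.trans[OF degree_monom_le])

lemma coeff_mult_top:
  fixes p q :: "real poly"
  assumes "degree p \<le> a" "degree q \<le> b"
  shows "coeff (p * q) (a + b) = coeff p a * coeff q b"
proof (cases "degree p = a \<and> degree q = b")
  case True
  then show ?thesis using coeff_mult_degree_sum[of p q] by simp
next
  case False
  hence "degree p < a \<or> degree q < b" using assms by auto
  moreover have "degree (p * q) < a + b" if "degree p < a \<or> degree q < b"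
    using that assms degree_mult_le[of p q] by linarith
  ultimately show ?thesis by (auto simp: coeff_eq_0)
qed

lemma sum_by_parts_aux:
  fixes c :: real
  shows "(\<Sum>j\<le>n. (c + (\<Sum>l\<le>j. d l)) * (V j - V (Suc j))) =
     c * V 0 + (\<Sum>j\<le>n. d j * V j) - (c + (\<Sum>l\<le>n. d l)) * V (Suc n)"
  by (induction n) (simp_all add: algebra_simps)

lemma int01_sum: "finite A \<Longrightarrow> int01 (\<Sum>x\<in>A. f x) = (\<Sum>x\<in>A. int01 (f x))"
  by (induction A rule: finite_induct) (simp_all add: int01_add)

lemma SL_basis: "degree P \<le> n \<Longrightarrow> \<exists>a. P = (\<Sum>l\<le>n. smult (a l) (SL l))"
proof (induction n arbitrary: P)
  case 0
  then obtain c where "P = [:c:]" by (metis degree_eq_zeroE le_zero_eq)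
  show ?case by (rule exI[of _ "\<lambda>_. c"]) (simp add: SL_def pcompose_1 \<open>P = [:c:]\<close>)
next
  case (Suc n)
  define a where "a = coeff P (Suc n) / coeff (SL (Suc n)) (Suc n)"
  define Q where "Q = P - smult a (SL (Suc n))"
  have lc: "coeff (SL (Suc n)) (Suc n) \<noteq> 0" using SL_lc_pos[of "Suc n"] by simp
  have "degree Q \<le> n"
  proof (rule degree_le, intro allI impI)
    fix i assume "n < i"
    show "coeff Q i = 0"
    proof (cases "i = Suc n")
      case True
      then show ?thesis using lc by (simp add: Q_def a_def)
    next
      case False
      with \<open>n < i\<close> have "i > Suc n" by simp
      then show ?thesis using Suc.prems SL_deg[of "Suc n"] by (simp add: Q_def coeff_eq_0)
    qed
  qed
  then obtain b where b: "Q = (\<Sum>l\<le>n. smult (b l) (SL l))" using Suc.IH by blast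
  define b' where "b' = b(Suc n := a)"
  have "P = (\<Sum>l\<le>n. smult (b l) (SL l)) + smult a (SL (Suc n))" using b Q_def by simp
  also have "(\<Sum>l\<le>n. smult (b l) (SL l)) = (\<Sum>l\<le>n. smult (b' l) (SL l))"
    by (rule sum.cong) (auto simp: b'_def)
  finally have "P = (\<Sum>l\<le>Suc n. smult (b' l) (SL l))" by (simp add: b'_def)
  then show ?case by blast
qed



definition Rm :: "nat \<Rightarrow> (nat \<Rightarrow> real) \<Rightarrow> (nat \<Rightarrow> real) \<Rightarrow> real poly \<Rightarrow> real" where
  "Rm k xi w p = int01 p - quad k xi w (poly p)"

definition sref :: "nat \<Rightarrow> (nat \<Rightarrow> real) \<Rightarrow> (nat \<Rightarrow> real) \<Rightarrow> real poly \<Rightarrow> real poly \<Rightarrow> real" where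
  "sref k xi w P Om = (\<Sum>j\<le>k. (poly Om 0 + (\<Sum>l\<le>j. w l * poly (pderiv Om) (xi l))) *
      integral {xi j..xi (Suc j)} (poly P))"

definition Hq :: "nat \<Rightarrow> (nat \<Rightarrow> real) \<Rightarrow> (nat \<Rightarrow> real) \<Rightarrow> real poly \<Rightarrow> real poly \<Rightarrow> real" where
  "Hq k xi w P Om = (\<Sum>j\<le>Suc k. w j * (poly P (xi j) * poly (pderiv Om) (xi j)))"

lemma quad_add: "quad k xi w (poly (p + q)) = quad k xi w (poly p) + quad k xi w (poly q)"
  by (simp add: quad_def algebra_simps sum.distrib)

lemma quad_smult: "quad k xi w (poly (smult c p)) = c * quad k xi w (poly p)"
  by (simp add: quad_def algebra_simps sum_distrib_left)

lemma Rm_add: "Rm k xi w (p + q) = Rm k xi w p + Rm k xi w q"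
  by (simp add: Rm_def quad_add int01_add)

lemma Rm_smult: "Rm k xi w (smult c p) = c * Rm k xi w p"
  by (simp add: Rm_def quad_smult int01_smult algebra_simps)

lemma alg_gam0:
  fixes D1 D2 D3 E r L1 :: real
  assumes "D1 \<noteq> 0" "D2 \<noteq> 0" "D3 \<noteq> 0"
  shows "1 / D3 + E / D2 * r * L1^2 = D1 / D3 * (1 / D1 + 2 * D3 / D2 * L1 * (E / (2 * D1) * L1) * r)"
  using assms by (simp add: field_simps power2_eq_square)

lemma alg_gam:
  fixes m :: nat and r L1 :: real
  shows "1 / (2 * real (Suc m) + 1) + real (Suc m) / (real (Suc m) + 1) * r * L1^2 =
    (2 * real m + 1) / (2 * real m + 3) *
    (1 / (2 * real m + 1) + 2 * (2 * real (Suc m) + 1) / (real (Suc m) + 1) * L1 *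
      (real (Suc m) / (2 * (2 * real m + 1)) * L1) * r)"
proof -
  have e: "2 * real (Suc m) + 1 = 2 * real m + 3" by simp
  show ?thesis unfolding e by (rule alg_gam0) (simp_all add: add_pos_nonneg)
qed

context
  fixes k :: nat and xi w :: "nat \<Rightarrow> real"
  assumes nodes: "valid_nodes k 0 1 xi"
    and S: "assumption_S k 0 1 xi w"
begin

lemma k1: "1 \<le> k" using S by (simp add: assumption_S_def)

lemma xi0: "xi 0 = 0" and xi1: "xi (Suc k) = 1" and ximono: "j \<le> k \<Longrightarrow> xi j \<le> xi (Suc j)"
  using nodes by (auto simp: valid_nodes_def less_imp_le)

lemma Rm_exact: "degree p \<le> 2*k - 1 \<Longrightarrow> Rm k xi w p = 0"
  using S by (simp add: assumption_S_def Rm_def int01_def)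

definition rho where "rho = Rm k xi w (monom 1 (2*k))"

lemma Rm_top: assumes "degree p \<le> 2*k" shows "Rm k xi w p = coeff p (2*k) * rho"
proof -
  define q where "q = p - monom (coeff p (2*k)) (2*k)"
  have "degree q \<le> 2*k - 1"
  proof (rule degree_le, intro allI impI)
    fix i assume "2*k - 1 < i"
    hence "i = 2*k \<or> i > 2*k" using k1 by linarith
    then show "coeff q i = 0" using assms by (auto simp: q_def coeff_eq_0)
  qed
  hence "Rm k xi w q = 0" by (rule Rm_exact)
  moreover have "p = q + smult (coeff p (2*k)) (monom 1 (2*k))" by (simp add: q_def smult_monom)
  ultimately show ?thesis unfolding rho_def by (metis Rm_add Rm_smult add_0)
qed

lemma Hq_sym:
  assumes "degree P \<le> k" "degree Om \<le> k"
  shows "Hq k xi w P Om + Hq k xi w Om P = poly P 1 * poly Om 1 - poly P 0 * poly Om 0"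
proof -
  have "Hq k xi w P Om + Hq k xi w Om P = quad k xi w (poly (pderiv (P * Om)))"
    by (simp add: Hq_def quad_def pderiv_mult sum.distrib[symmetric] algebra_simps)
  also have "\<dots> = int01 (pderiv (P * Om)) - Rm k xi w (pderiv (P * Om))"
    by (simp add: Rm_def)
  also have "Rm k xi w (pderiv (P * Om)) = 0"
  proof (rule Rm_exact)
    show "degree (pderiv (P * Om)) \<le> 2 * k - 1"
      using degree_mult_le[of P Om] assms by (simp add: degree_pderiv)
  qed
  also have "int01 (pderiv (P * Om)) = poly P 1 * poly Om 1 - poly P 0 * poly Om 0"
    by (simp add: int01_ftc)
  finally show ?thesis by simp
qed

lemma sref_formula:
  assumes dP: "degree P \<le> k" and dO: "degree Om \<le> k"
  shows "sref k xi w P Om = int01 (P * Om) + real k / (real k + 1) * rho * coeff P k * coeff Om k"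
proof -
  define A where "A = antider P"
  define V where "V = [:poly A 1:] - A"
  have pV: "poly V t = poly A 1 - poly A t" for t by (simp add: V_def)
  have dV: "pderiv V = - P" by (simp add: V_def A_def pderiv_diff pderiv_antider pderiv_pCons)
  define Vf where "Vf j = poly V (xi j)" for j
  define d where "d l = w l * poly (pderiv Om) (xi l)" for l
  have intg: "integral {xi j..xi (Suc j)} (poly P) = Vf j - Vf (Suc j)" if "j \<le> k" for j
    using ftc_poly[OF pderiv_antider ximono[OF that], of P] by (simp add: Vf_def pV A_def)
  have "sref k xi w P Om = (\<Sum>j\<le>k. (poly Om 0 + (\<Sum>l\<le>j. d l)) * (Vf j - Vf (Suc j)))"
    unfolding sref_def d_def by (rule sum.cong) (simp_all add: intg)
  also have "\<dots> = poly Om 0 * Vf 0 + (\<Sum>j\<le>k. d j * Vf j) - (poly Om 0 + (\<Sum>l\<le>k. d l)) * Vf (Suc k)"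
    by (rule sum_by_parts_aux)
  also have "Vf (Suc k) = 0" by (simp add: Vf_def xi1 pV)
  also have "Vf 0 = poly V 0" by (simp add: Vf_def xi0)
  also have "(\<Sum>j\<le>k. d j * Vf j) = quad k xi w (poly (pderiv Om * V))"
    using \<open>Vf (Suc k) = 0\<close> by (simp add: quad_def d_def Vf_def algebra_simps)
  also have "quad k xi w (poly (pderiv Om * V)) = int01 (pderiv Om * V) - Rm k xi w (pderiv Om * V)"
    by (simp add: Rm_def)
  also have "int01 (pderiv Om * V) = - poly Om 0 * poly V 0 + int01 (Om * P)"
    unfolding int01_ibp dV using \<open>Vf (Suc k) = 0\<close> 
    by (simp add: Vf_def xi1 int01_smult[of "-1", simplified])
  finally have e1: "sref k xi w P Om = int01 (Om * P) - Rm k xi w (pderiv Om * V)" by simp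
  have dOd: "degree (pderiv Om) \<le> k - 1" using dO by (simp add: degree_pderiv)
  have dVd: "degree V \<le> k + 1"
    using degree_antider[of P] dP unfolding V_def A_def
    by (intro order.trans[OF degree_diff_le_max]) auto
  have "degree (pderiv Om * V) \<le> 2*k"
    using degree_mult_le[of "pderiv Om" V] dOd dVd k1 by linarith
  hence "Rm k xi w (pderiv Om * V) = coeff (pderiv Om * V) (2*k) * rho" by (rule Rm_top)
  also have "coeff (pderiv Om * V) (2*k) = coeff (pderiv Om) (k-1) * coeff V (k+1)"
    using coeff_mult_top[OF dOd dVd] k1 by (simp add: mult_2)
  also have "coeff (pderiv Om) (k-1) = real k * coeff Om k"
    using k1 by (simp add: coeff_pderiv)
  also have "coeff V (k+1) = - coeff P k / (real k + 1)"
    by (simp add: V_def A_def coeff_antider_Suc)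
  finally have e2: "Rm k xi w (pderiv Om * V) = - (real k / (real k + 1)) * coeff P k * coeff Om k * rho"
    by simp
  show ?thesis unfolding e1 e2 by (simp add: mult.commute algebra_simps)
qed

lemma sref_sym: "degree P \<le> k \<Longrightarrow> degree Om \<le> k \<Longrightarrow> sref k xi w P Om = sref k xi w Om P"
  by (simp add: sref_formula mult.commute)

definition gam where "gam = 1/(2*real k+1) + real k / (real k + 1) * rho * (coeff (SL k) k)^2"

lemma gam_pos: "gam > 0"
proof -
  have c: "(1-0)/(2*real k - 1) - quad k xi w (\<lambda>t. shleg 0 1 (k+1) t * shleg 0 1 (k-1) t) > 0"
    using S by (simp add: assumption_S_def)
  have f: "(\<lambda>t. shleg 0 1 (k+1) t * shleg 0 1 (k-1) t) = poly (SL (k+1) * SL (k-1))"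
    by (simp add: shleg_SL fun_eq_iff)
  have i0: "int01 (SL (k+1) * SL (k-1)) = 0" by (rule SL_orth) (simp add: SL_deg)
  have dg: "degree (SL (k+1) * SL (k-1)) \<le> 2*k"
    using degree_mult_le[of "SL (k+1)" "SL (k-1)"] k1 by (simp add: SL_deg)
  have cf: "coeff (SL (k+1) * SL (k-1)) (2*k) = coeff (SL (k+1)) (k+1) * coeff (SL (k-1)) (k-1)"
    using coeff_mult_top[of "SL (k+1)" "k+1" "SL (k-1)" "k-1"] k1 by (simp add: SL_deg mult_2)
  have "quad k xi w (poly (SL (k+1) * SL (k-1))) = - coeff (SL (k+1)) (k+1) * coeff (SL (k-1)) (k-1) * rho"
    using Rm_top[OF dg] i0 cf by (simp add: Rm_def)
  with c f have c2: "1/(2*real k - 1) + coeff (SL (k+1)) (k+1) * coeff (SL (k-1)) (k-1) * rho > 0"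
    by simp
  obtain m where km: "k = Suc m" using k1 by (cases k) auto
  define L0 where "L0 = coeff (SL m) m"
  define L1 where "L1 = coeff (SL (Suc m)) (Suc m)"
  define L2 where "L2 = coeff (SL (Suc (Suc m))) (Suc (Suc m))"
  have e1: "L1 = 2 * (2*real m+1)/(real m+1) * L0" unfolding L0_def L1_def by (rule SL_lc_rec)
  have e2: "L2 = 2 * (2*real (Suc m)+1)/(real (Suc m)+1) * L1" unfolding L2_def L1_def by (rule SL_lc_rec)
  have e0: "L0 = real (Suc m) / (2 * (2 * real m + 1)) * L1" using e1 by (simp add: field_simps)
  have c3: "1/(2*real m + 1) + L2 * L0 * rho > 0" using c2 km by (simp add: L0_def L2_def add.commute)
  have g: "gam = 1/(2*real (Suc m)+1) + real (Suc m)/(real (Suc m)+1) * rho * L1^2"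
    unfolding gam_def by (simp add: km L1_def)
  have "gam = (2*real m+1)/(2*real m+3) * (1/(2*real m + 1) + L2 * L0 * rho)"
    unfolding g e2 e0 by (rule alg_gam)
  moreover have "(2*real m+1)/(2*real m+3) > 0" by simp
  ultimately show ?thesis using c3 by simp
qed

lemma SL_orth2: "int01 (SL l * SL m) = (if l = m then 1/(2*real l+1) else 0)"
proof (cases "l = m")
  case True
  then show ?thesis by (simp add: SL_norm)
next
  case False
  then show ?thesis
  proof (cases "l < m")
    case True
    then show ?thesis using SL_orth[of "SL l" m] by (simp add: SL_deg mult.commute)
  next
    case False
    with \<open>l \<noteq> m\<close> have "m < l" by simp
    then show ?thesis using SL_orth[of "SL m" l] by (simp add: SL_deg)
  qed
qed

lemma int01_basis_sq:
  "int01 ((\<Sum>l\<le>n. smult (a l) (SL l)) * (\<Sum>l\<le>n. smult (a l) (SL l))) = (\<Sum>l\<le>n. (a l)^2 / (2*real l+1))"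
proof -
  have "(\<Sum>l\<le>n. smult (a l) (SL l)) * (\<Sum>l\<le>n. smult (a l) (SL l)) =
        (\<Sum>l\<le>n. \<Sum>m\<le>n. smult (a l * a m) (SL l * SL m))"
    by (simp add: sum_product mult_smult_left mult_smult_right mult.commute)
  hence "int01 ((\<Sum>l\<le>n. smult (a l) (SL l)) * (\<Sum>l\<le>n. smult (a l) (SL l))) =
        (\<Sum>l\<le>n. \<Sum>m\<le>n. a l * a m * int01 (SL l * SL m))"
    by (simp add: int01_sum int01_smult)
  also have "\<dots> = (\<Sum>l\<le>n. \<Sum>m\<le>n. if m = l then (a l)^2 / (2*real l+1) else 0)"
    by (intro sum.cong refl) (auto simp: SL_orth2 power2_eq_square)
  also have "\<dots> = (\<Sum>l\<le>n. (a l)^2 / (2*real l+1))"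
    by (simp add: sum.delta)
  finally show ?thesis .
qed

lemma coeff_basis_top:
  "coeff (\<Sum>l\<le>n. smult (a l) (SL l)) n = a n * coeff (SL n) n"
proof -
  have "coeff (\<Sum>l\<le>n. smult (a l) (SL l)) n = (\<Sum>l\<le>n. if l = n then a n * coeff (SL n) n else 0)"
    unfolding coeff_sum by (intro sum.cong refl) (auto simp: coeff_eq_0 SL_deg)
  also have "\<dots> = a n * coeff (SL n) n" by (simp add: sum.delta')
  finally show ?thesis .
qed

lemma abs_le_sqrt_bound:
  fixes x K s :: real
  assumes "x^2 \<le> K^2 * s" "K \<ge> 0" "s \<ge> 0"
  shows "\<bar>x\<bar> \<le> K * sqrt s"
proof -
  have "\<bar>x\<bar> = sqrt (x^2)" by simp
  also have "\<dots> \<le> sqrt (K^2 * s)" using assms(1) by (rule real_sqrt_le_mono)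
  also have "\<dots> = K * sqrt s" using assms(2) by (simp add: real_sqrt_mult)
  finally show ?thesis .
qed

definition eps where "eps = min (1/(2*real k+1)) gam"

definition Bc where "Bc = (\<Sum>j\<le>Suc k. \<Sum>l\<le>k. (poly (SL l) (xi j))^2 + (poly (pderiv (SL l)) (xi j))^2)"

definition Kc where "Kc = sqrt (Bc / eps)"

lemma eps_pos: "eps > 0" using gam_pos by (simp add: eps_def)

lemma Bc_nonneg: "Bc \<ge> 0" unfolding Bc_def by (intro sum_nonneg) auto

lemma Kc_nonneg: "Kc \<ge> 0"
  unfolding Kc_def by (rule real_sqrt_ge_zero, rule divide_nonneg_pos[OF Bc_nonneg eps_pos])

lemma sref_basis:
  assumes "degree P \<le> k"
  shows "sref k xi w P P \<ge> 0 \<and>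
    (\<forall>j\<le>Suc k. \<bar>poly P (xi j)\<bar> \<le> Kc * sqrt (sref k xi w P P)
              \<and> \<bar>poly (pderiv P) (xi j)\<bar> \<le> Kc * sqrt (sref k xi w P P))"
proof -
  obtain a where P: "P = (\<Sum>l\<le>k. smult (a l) (SL l))" using SL_basis[OF assms] by blast
  define S2 where "S2 = (\<Sum>l\<le>k. (a l)^2)"
  have "sref k xi w P P = (\<Sum>l\<le>k. (a l)^2 / (2*real l+1)) + real k / (real k + 1) * rho * (a k * coeff (SL k) k)^2"
    using sref_formula[OF assms assms] unfolding P int01_basis_sq coeff_basis_top
    by (simp add: power2_eq_square mult.assoc)
  also have "\<dots> = (\<Sum>l<k. (a l)^2 / (2*real l+1)) + (a k)^2 * gam"
    by (simp add: lessThan_Suc_atMost[symmetric] gam_def algebra_simps power2_eq_square)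
  finally have sP: "sref k xi w P P = (\<Sum>l<k. (a l)^2 / (2*real l+1)) + (a k)^2 * gam" .
  have "(\<Sum>l<k. eps * (a l)^2) \<le> (\<Sum>l<k. (a l)^2 / (2*real l+1))"
  proof (rule sum_mono)
    fix l assume "l \<in> {..<k}"
    hence "eps \<le> 1/(2*real l+1)"
      unfolding eps_def by (intro order.trans[OF min.cobounded1]) (simp add: frac_le)
    hence "eps * (a l)^2 \<le> 1/(2*real l+1) * (a l)^2" by (rule mult_right_mono) simp
    thus "eps * (a l)^2 \<le> (a l)^2 / (2*real l+1)" by simp
  qed
  moreover have "eps * (a k)^2 \<le> (a k)^2 * gam"
  proof -
    have "eps * (a k)^2 \<le> gam * (a k)^2" unfolding eps_def by (rule mult_right_mono) simp_all
    thus ?thesis by (simp add: mult.commute)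
  qed
  ultimately have "eps * S2 \<le> sref k xi w P P"
    unfolding sP S2_def by (simp add: lessThan_Suc_atMost[symmetric] sum_distrib_left distrib_left)
  hence sge: "S2 \<le> sref k xi w P P / eps" using eps_pos by (simp add: field_simps)
  have S2nn: "S2 \<ge> 0" unfolding S2_def by (intro sum_nonneg) auto
  have snn: "sref k xi w P P \<ge> 0" using sge S2nn eps_pos
    by (metis divide_nonneg_pos order_trans linorder_not_le less_le_not_le div_0 divide_less_0_iff)
  have Kc2: "Kc^2 = Bc / eps" unfolding Kc_def by (rule real_sqrt_pow2, rule divide_nonneg_pos[OF Bc_nonneg eps_pos])
  have Kcnn: "Kc \<ge> 0" unfolding Kc_def by (rule real_sqrt_ge_zero, rule divide_nonneg_pos[OF Bc_nonneg eps_pos])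
  have key: "(\<Sum>l\<le>k. a l * y l)^2 \<le> Kc^2 * sref k xi w P P"
    if yb: "(\<Sum>l\<le>k. (y l)^2) \<le> Bc" for y
  proof -
    have "(\<Sum>l\<le>k. a l * y l)^2 \<le> S2 * (\<Sum>l\<le>k. (y l)^2)"
      unfolding S2_def by (rule Cauchy_Schwarz_ineq_sum)
    also have "\<dots> \<le> (sref k xi w P P / eps) * Bc"
      using sge yb S2nn by (intro mult_mono) (auto intro: sum_nonneg)
    also have "\<dots> = Kc^2 * sref k xi w P P" unfolding Kc2 by simp
    finally show ?thesis .
  qed
  have yb1: "(\<Sum>l\<le>k. (poly (SL l) (xi j))^2) \<le> Bc"
   and yb2: "(\<Sum>l\<le>k. (poly (pderiv (SL l)) (xi j))^2) \<le> Bc" if "j \<le> Suc k" for j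
  proof -
    have "(\<Sum>l\<le>k. (poly (SL l) (xi j))^2 + (poly (pderiv (SL l)) (xi j))^2) \<le> Bc"
      unfolding Bc_def using that by (intro member_le_sum) (auto intro: sum_nonneg)
    moreover have "(\<Sum>l\<le>k. (poly (SL l) (xi j))^2) \<le> (\<Sum>l\<le>k. (poly (SL l) (xi j))^2 + (poly (pderiv (SL l)) (xi j))^2)"
      by (intro sum_mono) simp
    moreover have "(\<Sum>l\<le>k. (poly (pderiv (SL l)) (xi j))^2) \<le> (\<Sum>l\<le>k. (poly (SL l) (xi j))^2 + (poly (pderiv (SL l)) (xi j))^2)"
      by (intro sum_mono) simp
    ultimately show "(\<Sum>l\<le>k. (poly (SL l) (xi j))^2) \<le> Bc"
      "(\<Sum>l\<le>k. (poly (pderiv (SL l)) (xi j))^2) \<le> Bc" by linarith+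
  qed
  have pv: "poly P t = (\<Sum>l\<le>k. a l * poly (SL l) t)" for t
    unfolding P by (simp add: poly_sum)
  have dv: "poly (pderiv P) t = (\<Sum>l\<le>k. a l * poly (pderiv (SL l)) t)" for t
    unfolding P by (simp add: poly_sum pderiv_sum' pderiv_smult)
  show ?thesis
  proof (intro conjI allI impI)
    show "sref k xi w P P \<ge> 0" by (rule snn)
  next
    fix j assume j: "j \<le> Suc k"
    show "\<bar>poly P (xi j)\<bar> \<le> Kc * sqrt (sref k xi w P P)"
      unfolding pv by (rule abs_le_sqrt_bound[OF key[OF yb1[OF j]] Kcnn snn])
    show "\<bar>poly (pderiv P) (xi j)\<bar> \<le> Kc * sqrt (sref k xi w P P)"
      unfolding dv by (rule abs_le_sqrt_bound[OF key[OF yb2[OF j]] Kcnn snn])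
  qed
qed

end


definition refp :: "(nat \<Rightarrow> real) \<Rightarrow> (nat \<Rightarrow> real poly) \<Rightarrow> nat \<Rightarrow> real poly" where
  "refp x v i = pcompose (v i) [:x i, x (Suc i) - x i:]"

lemma poly_refp: "poly (refp x v i) t = poly (v i) (x i + t * (x (Suc i) - x i))"
  by (simp add: refp_def poly_pcompose algebra_simps)

lemma refp_0: "poly (refp x v i) 0 = poly (v i) (x i)"
  by (simp add: poly_refp)

lemma refp_1: "poly (refp x v i) 1 = poly (v i) (x (Suc i))"
  by (simp add: poly_refp)

lemma refp_node: "poly (refp x v i) (xi j) = poly (v i) (cnode x xi i j)"
  by (simp add: poly_refp cnode_def)

lemma pderiv_refp_node:
  "cweight x w i j * poly (pderiv (v i)) (cnode x xi i j) = w j * poly (pderiv (refp x v i)) (xi j)"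
  by (simp add: refp_def pderiv_pcompose pderiv_pCons poly_pcompose cweight_def cnode_def algebra_simps)

lemma degree_refp: "degree (refp x v i) \<le> degree (v i)"
  unfolding refp_def using degree_pcompose_le[of "v i" "[:x i, x (Suc i) - x i:]"]
  by (simp add: degree_pCons_eq_if split: if_splits)

lemma integral_refp:
  assumes h: "x i < x (Suc i)" and ab: "xi j \<le> xi (Suc j)"
  shows "integral {cnode x xi i j .. cnode x xi i (Suc j)} (poly (v i)) =
         (x (Suc i) - x i) * integral {xi j .. xi (Suc j)} (poly (refp x v i))"
proof -
  define hh where "hh = x (Suc i) - x i"
  have hp: "hh > 0" using h by (simp add: hh_def)
  define A where "A = antider (v i)"
  define B where "B = smult (1/hh) (pcompose A [:x i, hh:])"
  have dB: "pderiv B = refp x v i"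
    using hp by (simp add: B_def A_def pderiv_smult pderiv_pcompose pderiv_pCons pderiv_antider refp_def hh_def)
  have c: "cnode x xi i j \<le> cnode x xi i (Suc j)"
    using ab hp by (simp add: cnode_def hh_def[symmetric] mult_right_mono)
  have "integral {cnode x xi i j .. cnode x xi i (Suc j)} (poly (v i)) =
        poly A (cnode x xi i (Suc j)) - poly A (cnode x xi i j)"
    by (rule ftc_poly[OF _ c]) (simp add: A_def pderiv_antider)
  also have "\<dots> = hh * (poly B (xi (Suc j)) - poly B (xi j))"
    using hp by (simp add: B_def poly_pcompose cnode_def hh_def[symmetric] algebra_simps)
  also have "poly B (xi (Suc j)) - poly B (xi j) = integral {xi j .. xi (Suc j)} (poly (refp x v i))"
    by (rule ftc_poly[OF dB ab, symmetric])
  finally show ?thesis by (simp add: hh_def)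
qed

lemma jump_refp: "jump N x om i = poly (refp x om (Suc i mod N)) 0 - poly (refp x om i) 1"
  by (simp add: jump_def refp_0 refp_1)

lemma Hstar_ref:
  "Hstar N k x xi w \<beta> v om = \<beta> * ((\<Sum>i<N. Hq k xi w (refp x v i) (refp x om i))
      + (\<Sum>i<N. poly (refp x v i) 1 * (poly (refp x om (Suc i mod N)) 0 - poly (refp x om i) 1)))"
proof -
  have "cweight x w i j * (poly (v i) (cnode x xi i j) * poly (pderiv (om i)) (cnode x xi i j))
        = w j * (poly (refp x v i) (xi j) * poly (pderiv (refp x om i)) (xi j))" for i j
    using pderiv_refp_node[of x w i j om xi] refp_node[of x v i xi j]
    by (metis mult.left_commute)
  then show ?thesis unfolding Hstar_def Hq_def jump_refp by (simp add: refp_1)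
qed

lemma sum_mod_shift:
  assumes "1 \<le> N"
  shows "(\<Sum>i<N. f (Suc i mod N)) = (\<Sum>i<N. f i)"
proof -
  obtain M where N: "N = Suc M" using assms by (cases N) auto
  have "(\<Sum>i<Suc M. f (Suc i mod Suc M)) = (\<Sum>i<M. f (Suc i mod Suc M)) + f 0"
    by simp
  also have "(\<Sum>i<M. f (Suc i mod Suc M)) = (\<Sum>i<M. f (Suc i))"
    by (intro sum.cong) auto
  also have "(\<Sum>i<M. f (Suc i)) + f 0 = (\<Sum>i<Suc M. f i)"
    by (subst sum.lessThan_Suc_shift) (rule add.commute)
  finally show ?thesis using N by simp
qed

lemma cs_sqrt:
  fixes a b :: "nat \<Rightarrow> real"
  shows "(\<Sum>i\<in>A. a i * b i) \<le> sqrt (\<Sum>i\<in>A. (a i)^2) * sqrt (\<Sum>i\<in>A. (b i)^2)"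
proof -
  have "(\<Sum>i\<in>A. a i * b i) \<le> sqrt ((\<Sum>i\<in>A. a i * b i)^2)" by simp
  also have "\<dots> \<le> sqrt ((\<Sum>i\<in>A. (a i)^2) * (\<Sum>i\<in>A. (b i)^2))"
    by (rule real_sqrt_le_mono, rule Cauchy_Schwarz_ineq_sum)
  also have "\<dots> = sqrt (\<Sum>i\<in>A. (a i)^2) * sqrt (\<Sum>i\<in>A. (b i)^2)" by (rule real_sqrt_mult)
  finally show ?thesis .
qed

context
  fixes k :: nat and xi w :: "nat \<Rightarrow> real"
  assumes nodes: "valid_nodes k 0 1 xi"
    and S: "assumption_S k 0 1 xi w"
begin

lemma star_ip_ref:
  assumes "\<forall>i<N. x i < x (Suc i)"
  shows "star_ip N k x xi w v om = (\<Sum>i<N. (x (Suc i) - x i) * sref k xi w (refp x v i) (refp x om i))"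
  unfolding star_ip_def sref_def
proof (rule sum.cong[OF refl])
  fix i assume i: "i \<in> {..<N}"
  show "(\<Sum>j\<le>k. Mstar x xi w om i j * integral {cnode x xi i j..cnode x xi i (Suc j)} (poly (v i))) =
    (x (Suc i) - x i) * (\<Sum>j\<le>k. (poly (refp x om i) 0 + (\<Sum>l\<le>j. w l * poly (pderiv (refp x om i)) (xi l))) *
       integral {xi j..xi (Suc j)} (poly (refp x v i)))"
    unfolding sum_distrib_left
  proof (rule sum.cong[OF refl])
    fix j assume j: "j \<in> {..k}"
    have "Mstar x xi w om i j = poly (refp x om i) 0 + (\<Sum>l\<le>j. w l * poly (pderiv (refp x om i)) (xi l))"
      by (simp add: Mstar_def refp_0 pderiv_refp_node)
    moreover have "integral {cnode x xi i j..cnode x xi i (Suc j)} (poly (v i)) =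
       (x (Suc i) - x i) * integral {xi j..xi (Suc j)} (poly (refp x v i))"
      using assms i j nodes by (intro integral_refp) (auto simp: valid_nodes_def less_imp_le)
    ultimately show "Mstar x xi w om i j * integral {cnode x xi i j..cnode x xi i (Suc j)} (poly (v i)) =
      (x (Suc i) - x i) * ((poly (refp x om i) 0 + (\<Sum>l\<le>j. w l * poly (pderiv (refp x om i)) (xi l))) *
       integral {xi j..xi (Suc j)} (poly (refp x v i)))" by simp
  qed
qed

lemma star_ip_sym:
  assumes "\<forall>i<N. x i < x (Suc i)" "Vk N k v" "Vk N k u"
  shows "star_ip N k x xi w v u = star_ip N k x xi w u v"
  unfolding star_ip_ref[OF assms(1)]
proof (rule sum.cong[OF refl])
  fix i assume "i \<in> {..<N}"
  hence "degree (refp x v i) \<le> k" "degree (refp x u i) \<le> k"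
    using assms(2,3) degree_refp[of x v i] degree_refp[of x u i] by (auto simp: Vk_def)
  then show "(x (Suc i) - x i) * sref k xi w (refp x v i) (refp x u i) =
        (x (Suc i) - x i) * sref k xi w (refp x u i) (refp x v i)"
    using sref_sym[OF nodes S] by simp
qed

end


context
  fixes k :: nat and xi w :: "nat \<Rightarrow> real"
  assumes nodes: "valid_nodes k 0 1 xi"
    and S: "assumption_S k 0 1 xi w"
begin

lemma Hstar_sum:
  assumes N: "1 \<le> N" and v: "Vk N k v" and om: "Vk N k om"
  shows "Hstar N k x xi w \<beta> v om + Hstar N k x xi w \<beta> om v = - \<beta> * jump_ip N x v om"
proof -
  define P where "P i = refp x v i" for i
  define Q where "Q i = refp x om i" for i
  define T where "T i = (poly (P i) 1 * poly (Q i) 1 - poly (P i) 0 * poly (Q i) 0)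
     + poly (P i) 1 * (poly (Q (Suc i mod N)) 0 - poly (Q i) 1)
     + poly (Q i) 1 * (poly (P (Suc i mod N)) 0 - poly (P i) 1)" for i
  have hq: "Hq k xi w (P i) (Q i) + Hq k xi w (Q i) (P i) = poly (P i) 1 * poly (Q i) 1 - poly (P i) 0 * poly (Q i) 0"
    if "i \<in> {..<N}" for i
  proof -
    have "degree (P i) \<le> k" "degree (Q i) \<le> k"
      using that v om degree_refp[of x v i] degree_refp[of x om i] by (auto simp: Vk_def P_def Q_def)
    then show ?thesis by (rule Hq_sym[OF nodes S])
  qed
  have "Hstar N k x xi w \<beta> v om + Hstar N k x xi w \<beta> om v =
     \<beta> * ((\<Sum>i<N. Hq k xi w (P i) (Q i) + Hq k xi w (Q i) (P i))
       + (\<Sum>i<N. poly (P i) 1 * (poly (Q (Suc i mod N)) 0 - poly (Q i) 1))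
       + (\<Sum>i<N. poly (Q i) 1 * (poly (P (Suc i mod N)) 0 - poly (P i) 1)))"
    unfolding Hstar_ref P_def Q_def by (simp add: sum.distrib algebra_simps)
  also have "(\<Sum>i<N. Hq k xi w (P i) (Q i) + Hq k xi w (Q i) (P i)) =
     (\<Sum>i<N. poly (P i) 1 * poly (Q i) 1 - poly (P i) 0 * poly (Q i) 0)"
    by (rule sum.cong[OF refl]) (rule hq)
  also have "(\<Sum>i<N. poly (P i) 1 * poly (Q i) 1 - poly (P i) 0 * poly (Q i) 0)
       + (\<Sum>i<N. poly (P i) 1 * (poly (Q (Suc i mod N)) 0 - poly (Q i) 1))
       + (\<Sum>i<N. poly (Q i) 1 * (poly (P (Suc i mod N)) 0 - poly (P i) 1)) = (\<Sum>i<N. T i)"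
    unfolding T_def by (simp add: sum.distrib)
  also have "(\<Sum>i<N. T i) = (\<Sum>i<N. (poly (P (Suc i mod N)) 0 * poly (Q (Suc i mod N)) 0 - poly (P i) 0 * poly (Q i) 0)
       - (poly (P (Suc i mod N)) 0 - poly (P i) 1) * (poly (Q (Suc i mod N)) 0 - poly (Q i) 1))"
    unfolding T_def by (rule sum.cong[OF refl]) (simp add: algebra_simps)
  also have "\<dots> = (\<Sum>i<N. poly (P (Suc i mod N)) 0 * poly (Q (Suc i mod N)) 0) - (\<Sum>i<N. poly (P i) 0 * poly (Q i) 0)
       - (\<Sum>i<N. (poly (P (Suc i mod N)) 0 - poly (P i) 1) * (poly (Q (Suc i mod N)) 0 - poly (Q i) 1))"
    by (simp add: sum_subtractf)
  also have "(\<Sum>i<N. poly (P (Suc i mod N)) 0 * poly (Q (Suc i mod N)) 0) = (\<Sum>i<N. poly (P i) 0 * poly (Q i) 0)"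
    using sum_mod_shift[OF N, of "\<lambda>i. poly (P i) 0 * poly (Q i) 0"] by simp
  also have "(\<Sum>i<N. (poly (P (Suc i mod N)) 0 - poly (P i) 1) * (poly (Q (Suc i mod N)) 0 - poly (Q i) 1)) = jump_ip N x v om"
    unfolding jump_ip_def jump_refp P_def Q_def ..
  finally show ?thesis by simp
qed

lemma part1:
  assumes mesh: "\<forall>i<N. x i < x (Suc i)" and N: "1 \<le> N"
    and v: "Vk N k v" and om: "Vk N k om" and Dv: "Vk N k (D v)" and Dom: "Vk N k (D om)"
    and e1: "star_ip N k x xi w (D v) om = \<tau> * Hstar N k x xi w \<beta> v om"
    and e2: "star_ip N k x xi w (D om) v = \<tau> * Hstar N k x xi w \<beta> om v"
  shows "star_ip N k x xi w (D v) om + star_ip N k x xi w v (D om) = - \<tau> * \<beta> * jump_ip N x v om"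
proof -
  have "star_ip N k x xi w v (D om) = star_ip N k x xi w (D om) v"
    by (rule star_ip_sym[OF nodes S mesh v Dom])
  hence "star_ip N k x xi w (D v) om + star_ip N k x xi w v (D om) =
     \<tau> * (Hstar N k x xi w \<beta> v om + Hstar N k x xi w \<beta> om v)"
    using e1 e2 by (simp add: algebra_simps)
  also have "\<dots> = - \<tau> * \<beta> * jump_ip N x v om" using Hstar_sum[OF N v om] by simp
  finally show ?thesis .
qed

lemma Hstar_bound:
  assumes mesh: "\<forall>i<N. x i < x (Suc i)" and N: "1 \<le> N"
    and v: "Vk N k v" and om: "Vk N k om"
    and Cq: "\<forall>i<N. meshsize N x \<le> Cq * (x (Suc i) - x i)" and beta: "\<beta> > 0"
  shows "Hstar N k x xi w \<beta> v om \<le>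
     (\<beta> * (Kc k xi w)^2 * ((\<Sum>j\<le>Suc k. \<bar>w j\<bar>) + 2) * Cq) / meshsize N x
       * star_norm N k x xi w v * star_norm N k x xi w om"
proof -
  define K where "K = Kc k xi w"
  define W where "W = (\<Sum>j\<le>Suc k. \<bar>w j\<bar>)"
  define hm where "hm = meshsize N x"
  define P where "P i = refp x v i" for i
  define Q where "Q i = refp x om i" for i
  define a where "a i = sqrt (sref k xi w (P i) (P i))" for i
  define b where "b i = sqrt (sref k xi w (Q i) (Q i))" for i
  have Knn: "K \<ge> 0" unfolding K_def by (rule Kc_nonneg[OF nodes S])
  have Wnn: "W \<ge> 0" unfolding W_def by (intro sum_nonneg) auto
  have h0: "x (Suc 0) - x 0 > 0" using mesh N by auto
  have hm_ge: "x (Suc i) - x i \<le> hm" if "i < N" for i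
    unfolding hm_def meshsize_def using that by (intro Max_ge) auto
  have hmpos: "hm > 0" using hm_ge[of 0] h0 N by linarith
  have Cqpos: "Cq > 0"
  proof -
    have "hm \<le> Cq * (x (Suc 0) - x 0)" using Cq N by (auto simp: hm_def)
    with hmpos have "0 < Cq * (x (Suc 0) - x 0)" by linarith
    with h0 show ?thesis by (simp add: zero_less_mult_iff)
  qed
  have degP: "degree (P i) \<le> k" and degQ: "degree (Q i) \<le> k" if "i < N" for i
    using that v om degree_refp[of x v i] degree_refp[of x om i] by (auto simp: Vk_def P_def Q_def)
  note SB = sref_basis[OF nodes S, folded K_def]
  have Pb: "\<bar>poly (P i) (xi j)\<bar> \<le> K * a i" "\<bar>poly (pderiv (P i)) (xi j)\<bar> \<le> K * a i"
    if "i < N" "j \<le> Suc k" for i j using SB[OF degP[OF that(1)]] that(2) by (auto simp: a_def)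
  have Qb: "\<bar>poly (Q i) (xi j)\<bar> \<le> K * b i" "\<bar>poly (pderiv (Q i)) (xi j)\<bar> \<le> K * b i"
    if "i < N" "j \<le> Suc k" for i j using SB[OF degQ[OF that(1)]] that(2) by (auto simp: b_def)
  have ann: "a i \<ge> 0" "b i \<ge> 0" if "i < N" for i
    using conjunct1[OF SB[OF degP[OF that]]] conjunct1[OF SB[OF degQ[OF that]]] by (simp_all add: a_def b_def)
  have x0: "xi 0 = 0" and x1: "xi (Suc k) = 1" using nodes by (auto simp: valid_nodes_def)
  have T1: "Hq k xi w (P i) (Q i) \<le> W * K^2 * (a i * b i)" if i: "i < N" for i
  proof -
    have "Hq k xi w (P i) (Q i) \<le> (\<Sum>j\<le>Suc k. \<bar>w j\<bar> * ((K * a i) * (K * b i)))"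
      unfolding Hq_def
    proof (rule sum_mono)
      fix j assume "j \<in> {..Suc k}"
      hence j: "j \<le> Suc k" by simp
      have "w j * (poly (P i) (xi j) * poly (pderiv (Q i)) (xi j)) \<le> \<bar>w j\<bar> * (\<bar>poly (P i) (xi j)\<bar> * \<bar>poly (pderiv (Q i)) (xi j)\<bar>)"
      proof -
        have "w j * (poly (P i) (xi j) * poly (pderiv (Q i)) (xi j)) \<le> \<bar>w j * (poly (P i) (xi j) * poly (pderiv (Q i)) (xi j))\<bar>"
          by (rule abs_ge_self)
        thus ?thesis by (simp add: abs_mult)
      qed
      also have "\<dots> \<le> \<bar>w j\<bar> * ((K * a i) * (K * b i))"
        using Pb(1)[OF i j] Qb(2)[OF i j] by (intro mult_left_mono mult_mono) auto
      finally show "w j * (poly (P i) (xi j) * poly (pderiv (Q i)) (xi j)) \<le> \<bar>w j\<bar> * ((K * a i) * (K * b i))" .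
    qed
    also have "\<dots> = W * K^2 * (a i * b i)" unfolding W_def sum_distrib_right[symmetric]
      by (simp add: power2_eq_square algebra_simps)
    finally show ?thesis .
  qed
  have T2: "poly (P i) 1 * (poly (Q (Suc i mod N)) 0 - poly (Q i) 1) \<le> K^2 * (a i * b (Suc i mod N)) + K^2 * (a i * b i)"
    if i: "i < N" for i
  proof -
    have iN: "Suc i mod N < N" using N by simp
    have p1: "\<bar>poly (P i) 1\<bar> \<le> K * a i" using Pb(1)[OF i, of "Suc k"] x1 by simp
    have q0: "\<bar>poly (Q (Suc i mod N)) 0\<bar> \<le> K * b (Suc i mod N)" using Qb(1)[OF iN, of 0] x0 by simp
    have q1: "\<bar>poly (Q i) 1\<bar> \<le> K * b i" using Qb(1)[OF i, of "Suc k"] x1 by simp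
    have "poly (P i) 1 * (poly (Q (Suc i mod N)) 0 - poly (Q i) 1) \<le> \<bar>poly (P i) 1\<bar> * (\<bar>poly (Q (Suc i mod N)) 0\<bar> + \<bar>poly (Q i) 1\<bar>)"
    proof -
      have "poly (P i) 1 * (poly (Q (Suc i mod N)) 0 - poly (Q i) 1) \<le> \<bar>poly (P i) 1 * (poly (Q (Suc i mod N)) 0 - poly (Q i) 1)\<bar>"
        by (rule abs_ge_self)
      also have "\<dots> = \<bar>poly (P i) 1\<bar> * \<bar>poly (Q (Suc i mod N)) 0 - poly (Q i) 1\<bar>" by (rule abs_mult)
      also have "\<dots> \<le> \<bar>poly (P i) 1\<bar> * (\<bar>poly (Q (Suc i mod N)) 0\<bar> + \<bar>poly (Q i) 1\<bar>)"
        by (intro mult_left_mono abs_triangle_ineq4) simp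
      finally show ?thesis .
    qed
    also have "\<dots> \<le> (K * a i) * (K * b (Suc i mod N) + K * b i)"
      using p1 q0 q1 by (intro mult_mono add_mono) auto
    also have "\<dots> = K^2 * (a i * b (Suc i mod N)) + K^2 * (a i * b i)" by (simp add: power2_eq_square algebra_simps)
    finally show ?thesis .
  qed
  define SA where "SA = sqrt (\<Sum>i<N. (a i)^2)"
  define SB' where "SB' = sqrt (\<Sum>i<N. (b i)^2)"
  have c1: "(\<Sum>i<N. a i * b i) \<le> SA * SB'" unfolding SA_def SB'_def by (rule cs_sqrt)
  have c2: "(\<Sum>i<N. a i * b (Suc i mod N)) \<le> SA * SB'"
  proof -
    have "(\<Sum>i<N. a i * b (Suc i mod N)) \<le> SA * sqrt (\<Sum>i<N. (b (Suc i mod N))^2)"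
      unfolding SA_def by (rule cs_sqrt)
    also have "(\<Sum>i<N. (b (Suc i mod N))^2) = (\<Sum>i<N. (b i)^2)"
      by (rule sum_mod_shift[OF N])
    finally show ?thesis unfolding SB'_def .
  qed
  have Hle: "Hstar N k x xi w \<beta> v om \<le> \<beta> * (K^2 * (W + 2) * (SA * SB'))"
  proof -
    have "(\<Sum>i<N. Hq k xi w (P i) (Q i)) + (\<Sum>i<N. poly (P i) 1 * (poly (Q (Suc i mod N)) 0 - poly (Q i) 1))
       \<le> (\<Sum>i<N. W * K^2 * (a i * b i)) + (\<Sum>i<N. K^2 * (a i * b (Suc i mod N)) + K^2 * (a i * b i))"
      using T1 T2 by (intro add_mono sum_mono) auto
    also have "\<dots> = K^2 * ((W + 1) * (\<Sum>i<N. a i * b i) + (\<Sum>i<N. a i * b (Suc i mod N)))"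
      by (simp add: sum.distrib sum_distrib_left algebra_simps)
    also have "\<dots> \<le> K^2 * ((W + 1) * (SA * SB') + SA * SB')"
      using c1 c2 Wnn by (intro mult_left_mono add_mono) auto
    also have "\<dots> = K^2 * (W + 2) * (SA * SB')" by (simp add: algebra_simps)
    finally show ?thesis unfolding Hstar_ref P_def[symmetric] Q_def[symmetric]
      using beta by (simp add: mult_left_mono)
  qed
  have sa: "SA \<le> sqrt (Cq / hm) * star_norm N k x xi w v"
   and sb: "SB' \<le> sqrt (Cq / hm) * star_norm N k x xi w om"
  proof -
    have gen: "sqrt (\<Sum>i<N. (sqrt (sref k xi w (refp x u i) (refp x u i)))^2) \<le> sqrt (Cq / hm) * star_norm N k x xi w u"
      if u: "Vk N k u" for u
    proof -
      have nn: "sref k xi w (refp x u i) (refp x u i) \<ge> 0" if "i < N" for i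
        using SB[of "refp x u i"] degree_refp[of x u i] u that by (auto simp: Vk_def)
      have "(\<Sum>i<N. (sqrt (sref k xi w (refp x u i) (refp x u i)))^2) = (\<Sum>i<N. sref k xi w (refp x u i) (refp x u i))"
        using nn by (intro sum.cong) auto
      also have "\<dots> \<le> (\<Sum>i<N. Cq / hm * ((x (Suc i) - x i) * sref k xi w (refp x u i) (refp x u i)))"
      proof (rule sum_mono)
        fix i assume "i \<in> {..<N}"
        hence i: "i < N" by simp
        have "1 \<le> Cq / hm * (x (Suc i) - x i)" using Cq i hmpos by (simp add: hm_def field_simps)
        hence "1 * sref k xi w (refp x u i) (refp x u i) \<le> Cq / hm * (x (Suc i) - x i) * sref k xi w (refp x u i) (refp x u i)"
          using nn[OF i] by (intro mult_right_mono) auto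
        thus "sref k xi w (refp x u i) (refp x u i) \<le> Cq / hm * ((x (Suc i) - x i) * sref k xi w (refp x u i) (refp x u i))"
          by (simp add: mult.assoc)
      qed
      also have "\<dots> = Cq / hm * star_ip N k x xi w u u"
        unfolding star_ip_ref[OF nodes S mesh] sum_distrib_left ..
      finally have "(\<Sum>i<N. (sqrt (sref k xi w (refp x u i) (refp x u i)))^2) \<le> Cq / hm * star_ip N k x xi w u u" .
      hence "sqrt (\<Sum>i<N. (sqrt (sref k xi w (refp x u i) (refp x u i)))^2) \<le> sqrt (Cq / hm * star_ip N k x xi w u u)"
        by (rule real_sqrt_le_mono)
      also have "\<dots> = sqrt (Cq / hm) * star_norm N k x xi w u" by (simp only: star_norm_def real_sqrt_mult)
      finally show ?thesis .
    qed
    show "SA \<le> sqrt (Cq / hm) * star_norm N k x xi w v" using gen[OF v] by (simp add: SA_def a_def P_def)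
    show "SB' \<le> sqrt (Cq / hm) * star_norm N k x xi w om" using gen[OF om] by (simp add: SB'_def b_def Q_def)
  qed
  have SAnn: "SA \<ge> 0" "SB' \<ge> 0" unfolding SA_def SB'_def
    by (rule real_sqrt_ge_zero, intro sum_nonneg, simp)+
  have "SA * SB' \<le> (sqrt (Cq / hm) * star_norm N k x xi w v) * (sqrt (Cq / hm) * star_norm N k x xi w om)"
    using sa sb SAnn by (intro mult_mono) (auto intro: order_trans[OF _ sa])
  also have "\<dots> = Cq / hm * star_norm N k x xi w v * star_norm N k x xi w om"
  proof -
    have "sqrt (Cq / hm) * sqrt (Cq / hm) = Cq / hm"
      using Cqpos hmpos by simp
    thus ?thesis by (metis mult.commute mult.left_commute)
  qed
  finally have "SA * SB' \<le> Cq / hm * star_norm N k x xi w v * star_norm N k x xi w om" .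
  hence "\<beta> * (K^2 * (W + 2) * (SA * SB')) \<le> \<beta> * (K^2 * (W + 2) * (Cq / hm * star_norm N k x xi w v * star_norm N k x xi w om))"
    using beta Wnn by (intro mult_left_mono) auto
  with Hle show ?thesis unfolding K_def[symmetric] W_def[symmetric] hm_def[symmetric]
    by (simp add: algebra_simps)
qed

end


theorem proposition4p8:
  fixes k :: nat and xi w :: "nat \<Rightarrow> real" and \<beta> Cq :: real
  assumes nodes: "valid_nodes k 0 1 xi"
    and S: "assumption_S k 0 1 xi w"
    and upwind: "w 0 = 0"
    and beta: "\<beta> > 0"
  shows "\<exists>C. \<forall>(N::nat) (x::nat \<Rightarrow> real) (\<tau>::real) (D::(nat \<Rightarrow> real poly) \<Rightarrow> (nat \<Rightarrow> real poly)).
     (1 \<le> N \<and> (\<forall>i<N. x i < x (Suc i))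
      \<and> (\<forall>i<N. meshsize N x \<le> Cq * (x (Suc i) - x i)) \<and> 0 < \<tau>
      \<and> (\<forall>v. Vk N k v \<longrightarrow> Vk N k (D v) \<and>
             (\<forall>om. Vk N k om \<longrightarrow> star_ip N k x xi w (D v) om = \<tau> * Hstar N k x xi w \<beta> v om)))
     \<longrightarrow>
     (\<forall>v om. Vk N k v \<and> Vk N k om \<longrightarrow>
        star_ip N k x xi w (D v) om + star_ip N k x xi w v (D om) = - \<tau> * \<beta> * jump_ip N x v om)
   \<and> (\<forall>(m::nat) (\<theta>::nat \<Rightarrow> nat \<Rightarrow> real) (vs::nat \<Rightarrow> nat \<Rightarrow> real poly).
        (\<forall>a<m. \<forall>b<m. \<theta> a b = \<theta> b a)
        \<and> (\<forall>c::nat \<Rightarrow> real. 0 \<le> (\<Sum>a<m. \<Sum>b<m. \<theta> a b * c a * c b))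
        \<and> (\<forall>a<m. Vk N k (vs a)) \<longrightarrow>
        (\<Sum>a<m. \<Sum>b<m. \<theta> a b * star_ip N k x xi w (D (vs a)) (vs b))
          = - (\<tau> * \<beta> / 2) * (\<Sum>a<m. \<Sum>b<m. \<theta> a b * jump_ip N x (vs a) (vs b))
        \<and> - (\<tau> * \<beta> / 2) * (\<Sum>a<m. \<Sum>b<m. \<theta> a b * jump_ip N x (vs a) (vs b)) \<le> 0)
   \<and> (\<forall>v om. Vk N k v \<and> Vk N k om \<longrightarrow>
        star_ip N k x xi w (D v) om
          \<le> C * \<tau> / meshsize N x * star_norm N k x xi w v * star_norm N k x xi w om)"
proof -
  define C where "C = \<beta> * (Kc k xi w)^2 * ((\<Sum>j\<le>Suc k. \<bar>w j\<bar>) + 2) * Cq"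
  show ?thesis
  proof (rule exI[of _ C], intro allI impI)
    fix N :: nat and x :: "nat \<Rightarrow> real" and \<tau> :: real and D :: "(nat \<Rightarrow> real poly) \<Rightarrow> (nat \<Rightarrow> real poly)"
    assume H: "1 \<le> N \<and> (\<forall>i<N. x i < x (Suc i))
      \<and> (\<forall>i<N. meshsize N x \<le> Cq * (x (Suc i) - x i)) \<and> 0 < \<tau>
      \<and> (\<forall>v. Vk N k v \<longrightarrow> Vk N k (D v) \<and>
             (\<forall>om. Vk N k om \<longrightarrow> star_ip N k x xi w (D v) om = \<tau> * Hstar N k x xi w \<beta> v om))"
    have N: "1 \<le> N" and mesh: "\<forall>i<N. x i < x (Suc i)"
      and Cqh: "\<forall>i<N. meshsize N x \<le> Cq * (x (Suc i) - x i)" and tau: "0 < \<tau>"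
      and DV: "\<And>v. Vk N k v \<Longrightarrow> Vk N k (D v)"
      and DE: "\<And>v om. Vk N k v \<Longrightarrow> Vk N k om \<Longrightarrow> star_ip N k x xi w (D v) om = \<tau> * Hstar N k x xi w \<beta> v om"
      using H by auto
    have one: "star_ip N k x xi w (D v) om + star_ip N k x xi w v (D om) = - \<tau> * \<beta> * jump_ip N x v om"
      if "Vk N k v" "Vk N k om" for v om
      using part1[OF nodes S mesh N that DV[OF that(1)] DV[OF that(2)] DE[OF that] DE[OF that(2,1)]] .
    have sym: "star_ip N k x xi w v (D om) = star_ip N k x xi w (D om) v"
      if "Vk N k v" "Vk N k om" for v om
      by (rule star_ip_sym[OF nodes S mesh that(1) DV[OF that(2)]])
    show "(\<forall>v om. Vk N k v \<and> Vk N k om \<longrightarrow>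
        star_ip N k x xi w (D v) om + star_ip N k x xi w v (D om) = - \<tau> * \<beta> * jump_ip N x v om)
   \<and> (\<forall>(m::nat) (\<theta>::nat \<Rightarrow> nat \<Rightarrow> real) (vs::nat \<Rightarrow> nat \<Rightarrow> real poly).
        (\<forall>a<m. \<forall>b<m. \<theta> a b = \<theta> b a)
        \<and> (\<forall>c::nat \<Rightarrow> real. 0 \<le> (\<Sum>a<m. \<Sum>b<m. \<theta> a b * c a * c b))
        \<and> (\<forall>a<m. Vk N k (vs a)) \<longrightarrow>
        (\<Sum>a<m. \<Sum>b<m. \<theta> a b * star_ip N k x xi w (D (vs a)) (vs b))
          = - (\<tau> * \<beta> / 2) * (\<Sum>a<m. \<Sum>b<m. \<theta> a b * jump_ip N x (vs a) (vs b))
        \<and> - (\<tau> * \<beta> / 2) * (\<Sum>a<m. \<Sum>b<m. \<theta> a b * jump_ip N x (vs a) (vs b)) \<le> 0)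
   \<and> (\<forall>v om. Vk N k v \<and> Vk N k om \<longrightarrow>
        star_ip N k x xi w (D v) om
          \<le> C * \<tau> / meshsize N x * star_norm N k x xi w v * star_norm N k x xi w om)"
    proof (intro conjI allI impI)
      fix v om assume "Vk N k v \<and> Vk N k om"
      then show "star_ip N k x xi w (D v) om + star_ip N k x xi w v (D om) = - \<tau> * \<beta> * jump_ip N x v om"
        using one by blast
    next
      fix m :: nat and \<theta> :: "nat \<Rightarrow> nat \<Rightarrow> real" and vs :: "nat \<Rightarrow> nat \<Rightarrow> real poly"
      assume A: "(\<forall>a<m. \<forall>b<m. \<theta> a b = \<theta> b a)
        \<and> (\<forall>c::nat \<Rightarrow> real. 0 \<le> (\<Sum>a<m. \<Sum>b<m. \<theta> a b * c a * c b))
        \<and> (\<forall>a<m. Vk N k (vs a))"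
      hence th: "\<And>a b. a < m \<Longrightarrow> b < m \<Longrightarrow> \<theta> a b = \<theta> b a"
        and psd: "\<And>c. 0 \<le> (\<Sum>a<m. \<Sum>b<m. \<theta> a b * c a * c b)"
        and vsk: "\<And>a. a < m \<Longrightarrow> Vk N k (vs a)" by auto
      define s where "s a b = star_ip N k x xi w (D (vs a)) (vs b)" for a b
      define J where "J a b = jump_ip N x (vs a) (vs b)" for a b
      define X where "X = (\<Sum>a<m. \<Sum>b<m. \<theta> a b * s a b)"
      have pair: "s a b + s b a = - \<tau> * \<beta> * J a b" if "a < m" "b < m" for a b
        using one[OF vsk[OF that(1)] vsk[OF that(2)]] sym[OF vsk[OF that(1)] vsk[OF that(2)]]
        by (simp add: s_def J_def)
      have "X = (\<Sum>b<m. \<Sum>a<m. \<theta> a b * s a b)" unfolding X_def by (rule sum.swap)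
      also have "\<dots> = (\<Sum>a<m. \<Sum>b<m. \<theta> a b * s b a)"
        by (intro sum.cong refl) (simp add: th)
      finally have X2: "X = (\<Sum>a<m. \<Sum>b<m. \<theta> a b * s b a)" .
      have "2 * X = (\<Sum>a<m. \<Sum>b<m. \<theta> a b * (s a b + s b a))"
        unfolding mult_2 by (subst X_def, subst X2) (simp add: sum.distrib[symmetric] algebra_simps)
      also have "\<dots> = (\<Sum>a<m. \<Sum>b<m. - \<tau> * \<beta> * (\<theta> a b * J a b))"
        by (intro sum.cong refl) (simp add: pair)
      also have "\<dots> = - \<tau> * \<beta> * (\<Sum>a<m. \<Sum>b<m. \<theta> a b * J a b)"
        by (simp add: sum_distrib_left)
      finally have X3: "X = - (\<tau> * \<beta> / 2) * (\<Sum>a<m. \<Sum>b<m. \<theta> a b * J a b)" by simp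
      show "(\<Sum>a<m. \<Sum>b<m. \<theta> a b * star_ip N k x xi w (D (vs a)) (vs b))
          = - (\<tau> * \<beta> / 2) * (\<Sum>a<m. \<Sum>b<m. \<theta> a b * jump_ip N x (vs a) (vs b))"
        using X3 unfolding X_def s_def J_def .
      have "(\<Sum>a<m. \<Sum>b<m. \<theta> a b * J a b) =
            (\<Sum>a<m. \<Sum>b<m. \<Sum>i<N. \<theta> a b * jump N x (vs a) i * jump N x (vs b) i)"
        unfolding J_def jump_ip_def by (simp add: sum_distrib_left mult.assoc)
      also have "\<dots> = (\<Sum>i<N. \<Sum>a<m. \<Sum>b<m. \<theta> a b * jump N x (vs a) i * jump N x (vs b) i)"
        by (simp add: sum.swap[of _ "{..<N}"])
      also have "\<dots> \<ge> 0"
        by (rule sum_nonneg) (rule psd)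
      finally have "(\<Sum>a<m. \<Sum>b<m. \<theta> a b * J a b) \<ge> 0" .
      moreover have "\<tau> * \<beta> / 2 > 0" using tau beta by simp
      ultimately show "- (\<tau> * \<beta> / 2) * (\<Sum>a<m. \<Sum>b<m. \<theta> a b * jump_ip N x (vs a) (vs b)) \<le> 0"
        unfolding J_def by (simp add: mult_nonneg_nonneg)
    next
      fix v om assume "Vk N k v \<and> Vk N k om"
      hence v: "Vk N k v" and om: "Vk N k om" by auto
      have "star_ip N k x xi w (D v) om = \<tau> * Hstar N k x xi w \<beta> v om" by (rule DE[OF v om])
      also have "\<dots> \<le> \<tau> * (C / meshsize N x * star_norm N k x xi w v * star_norm N k x xi w om)"
        using Hstar_bound[OF nodes S mesh N v om Cqh beta] tau unfolding C_def
        by (intro mult_left_mono) auto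
      also have "\<dots> = C * \<tau> / meshsize N x * star_norm N k x xi w v * star_norm N k x xi w om"
        by (simp add: algebra_simps)
      finally show "star_ip N k x xi w (D v) om
          \<le> C * \<tau> / meshsize N x * star_norm N k x xi w v * star_norm N k x xi w om" .
    qed
  qed
qed

end
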